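(* For all integers $p\ge4$, $d\ge2$ and $n\ge2$, $$p\,n\,N_{d,n}<(d^{p-1}-d^{\lfloor p/2\rfloor})(d^{p-1}-1)^{n-1},$$ where $N_{d,n}=\binom{d+n}{n}-n-1$. *)

theory Defs
  imports Main
begin

definition N_dn :: "nat \<Rightarrow> nat \<Rightarrow> int" where
  "N_dn d n = int ((d + n) choose n) - int n - 1"

end

theory Submission
  imports Defs
begin

lemma two_choose: "2 * ((n + 2) choose n) = (n + 1) * (n + 2)"
proof -
  have "(n + 2) choose n = (n + 2) choose 2"
    using binomial_symmetric[of n "n+2"] by simp
  also have "\<dots> = (n + 2) * (n + 1) div 2" by (simp add: choose_two)
  finally show ?thesis by simp
qed

lemma C_lower: assumes "d \<ge> 2" shows "(n + 1) * (n + 2) \<le> 2 * ((d + n) choose n)"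
proof -
  have "(n + 2) choose n \<le> (d + n) choose n" using assms by (intro binomial_right_mono) simp
  thus ?thesis using two_choose[of n] by simp
qed

lemma C_rec: "(n + 1) * ((d + (n + 1)) choose (n + 1)) = (d + n + 1) * ((d + n) choose n)"
  using Suc_times_binomial[of n "d + n"] by simp

lemma step_alg:
  fixes b d n C C' :: int
  assumes n: "n \<ge> 2" and b1: "b \<ge> d+3" and b2: "b \<ge> 7" and d: "d \<ge> 2"
    and C: "2*C \<ge> (n+1)*(n+2)" and rec: "(n+1)*C' = (d+n+1)*C"
  shows "(n+1)*(C'-n-2) \<le> b*(n*(C-n-1))"
proof -
  define e where "e = b*n - d - n - 1"
  have bn: "b*n \<ge> 2*b" using n b2 by (simp add: mult_left_mono)
  have "(b-2)*n \<ge> (b-2)*2" using n b2 by (intro mult_left_mono) auto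
  hence e2: "2*e \<ge> b*n" unfolding e_def using b1 by (simp add: algebra_simps)
  have e0: "e \<ge> 0" using e2 bn b2 by linarith
  have Cp: "C \<ge> 0" using C n by (smt (verit) mult_nonneg_nonneg)
  have "4*(e*C) = 2*e*(2*C)" by simp
  also have "\<dots> \<ge> 2*e*((n+1)*(n+2))" using C e0 by (intro mult_left_mono) auto
  finally have s1: "4*(e*C) \<ge> 2*e*((n+1)*(n+2))" .
  have "2*e*((n+1)*(n+2)) \<ge> (b*n)*((n+1)*(n+2))"
    using e2 n by (intro mult_right_mono) auto
  moreover have "(b*n)*((n+1)*(n+2)) \<ge> (b*n)*((n+1)*4)"
    using n b2 by (intro mult_left_mono) auto
  ultimately have "e*C \<ge> b*n*(n+1)" using s1 by (simp add: algebra_simps)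
  moreover have "(n+1)*(C'-n-2) = (d+n+1)*C - (n+1)*(n+2)" using rec by (simp add: algebra_simps)
  moreover have "b*(n*(C-n-1)) = e*C + (d+n+1)*C - b*n*(n+1)" unfolding e_def by (simp add: algebra_simps)
  ultimately show ?thesis using n by (smt (verit) mult_nonneg_nonneg)
qed


lemma pow_bound: "p \<ge> 4 \<Longrightarrow> p \<le> 2 ^ (p - 2)"
proof (induction p rule: nat_induct_at_least)
  case base then show ?case by simp
next
  case (Suc m)
  have "Suc m - 2 = Suc (m - 2)" using Suc.hyps by simp
  hence "(2::nat) ^ (Suc m - 2) = 2 * 2 ^ (m - 2)" by simp
  then show ?case using Suc by simp
qed

theorem lemma5p5:
  fixes p d n :: nat
  assumes "p \<ge> 4" and "d \<ge> 2" and "n \<ge> 2"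
  shows "int p * int n * N_dn d n
         < (int d ^ (p - 1) - int d ^ (p div 2)) * (int d ^ (p - 1) - 1) ^ (n - 1)"
proof -
  define E where "E = int d ^ (p - 2)"
  define D where "D = int d ^ (p - 1)"
  have DE: "D = int d * E" unfolding D_def E_def using assms(1)
  proof -
    have "p - 1 = Suc (p - 2)" using assms(1) by simp
    thus "int d ^ (p - 1) = int d * int d ^ (p - 2)" by simp
  qed
  have pE: "int p \<le> E"
  proof -
    have "p \<le> 2 ^ (p - 2)" using pow_bound assms(1) by simp
    also have "(2::nat) ^ (p - 2) \<le> d ^ (p - 2)" using assms(2) by (intro power_mono) auto
    finally show ?thesis unfolding E_def by (metis of_nat_le_iff of_nat_power)
  qed
  have kE: "int d ^ (p div 2) \<le> E" unfolding E_def
    using assms by (intro power_increasing) auto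
  have d3: "int d ^ 3 \<le> D" unfolding D_def using assms by (intro power_increasing) auto
  have "int d ^ 3 = int d * int d * int d" by (simp add: power3_eq_cube)
  moreover have "int d * int d * int d \<ge> 2 * 2 * int d" using assms(2)
    by (intro mult_right_mono mult_mono) auto
  ultimately have Dbig: "D > int d + 5" using d3 assms(2) by linarith
  have b7: "D - 1 \<ge> 7" using Dbig assms(2) by linarith
  have bd: "D - 1 \<ge> int d + 3" using Dbig by linarith
  have Epos: "E \<ge> 1" using pE assms(1) by linarith
  have base: "int p * 2 * N_dn d 2 < (D - int d ^ (p div 2)) * (D - 1)"
  proof -
    have c2: "2 * ((d + 2) choose 2) = (d + 1) * (d + 2)"
      using two_choose[of d] binomial_symmetric[of d "d+2"] by simp
    have c2': "2 * int ((d + 2) choose 2) = (int d + 1) * (int d + 2)"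
      using arg_cong[OF c2, of int] by (simp add: algebra_simps)
    have "N_dn d 2 = int ((d + 2) choose 2) - 3" unfolding N_dn_def by simp
    hence N2: "2 * N_dn d 2 = (int d + 4) * (int d - 1)" using c2' by (simp add: algebra_simps)
    have "int p * 2 * N_dn d 2 = int p * ((int d + 4) * (int d - 1))" using N2 by simp
    also have "\<dots> \<le> E * ((int d + 4) * (int d - 1))"
      using pE assms(2) by (intro mult_right_mono) auto
    also have "\<dots> < E * ((D - 1) * (int d - 1))"
      using Epos assms(2) Dbig by (intro mult_strict_left_mono mult_strict_right_mono) auto
    also have "\<dots> = (D - E) * (D - 1)" using DE by (simp add: algebra_simps)
    also have "\<dots> \<le> (D - int d ^ (p div 2)) * (D - 1)"
      using kE b7 by (intro mult_right_mono) auto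
    finally show ?thesis .
  qed
  have "int p * int n * N_dn d n < (D - int d ^ (p div 2)) * (D - 1) ^ (n - 1)"
    using assms(3)
  proof (induction n rule: nat_induct_at_least)
    case base then show ?case using \<open>int p * 2 * N_dn d 2 < _\<close> by simp
  next
    case (Suc m)
    define C0 where "C0 = int ((d + m) choose m)"
    define C1 where "C1 = int ((d + (m + 1)) choose (m + 1))"
    have rec: "(int m + 1) * C1 = (int d + int m + 1) * C0"
      using arg_cong[OF C_rec[of m d], of int] unfolding C0_def C1_def
      by (simp only: of_nat_mult of_nat_add of_nat_1)
    have low: "(int m + 1) * (int m + 2) \<le> 2 * C0"
    proof -
      have "int ((m + 1) * (m + 2)) \<le> int (2 * ((d + m) choose m))"
        using C_lower[of d m] assms(2) by (simp only: of_nat_le_iff)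
      thus ?thesis unfolding C0_def by (simp only: of_nat_mult of_nat_add of_nat_1 of_nat_numeral)
    qed
    have N0: "N_dn d m = C0 - int m - 1" unfolding N_dn_def C0_def by simp
    have N1: "N_dn d (Suc m) = C1 - int m - 2" unfolding N_dn_def C1_def Suc_eq_plus1
      by (simp only: of_nat_add of_nat_1)
    have st: "(int m + 1) * (C1 - int m - 2) \<le> (D - 1) * (int m * (C0 - int m - 1))"
      by (rule step_alg[OF _ bd b7 _ low rec]) (use Suc.hyps assms(2) in auto)
    have "int p * int (Suc m) * N_dn d (Suc m) = int p * ((int m + 1) * (C1 - int m - 2))"
      unfolding N1 by (simp add: algebra_simps)
    also have "\<dots> \<le> int p * ((D - 1) * (int m * (C0 - int m - 1)))"
      using st by (intro mult_left_mono) auto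
    also have "\<dots> = (D - 1) * (int p * int m * N_dn d m)"
      unfolding N0 by (simp add: algebra_simps)
    also have "\<dots> < (D - 1) * ((D - int d ^ (p div 2)) * (D - 1) ^ (m - 1))"
      using Suc.IH b7 by (intro mult_strict_left_mono) auto
    also have "\<dots> = (D - int d ^ (p div 2)) * (D - 1) ^ (Suc m - 1)"
      using Suc.hyps by (cases m) (auto simp: algebra_simps)
    finally show ?case .
  qed
  thus ?thesis unfolding D_def .
qed

end
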